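(* Let $d,N\in\mathbb{N}$, $0<\lambda<1$ and $\epsilon\ge 0$. Let $\bm G:=\frac1N \bm Z\bm M\bm Z^\top\in\mathbb{R}^{(d+1)\times(d+1)}$; this matrix does not depend on $\bm\Delta$. For $i,j\in[d+1]$ and $k\in[d]$ put $$h_{i,j,k}:=\mathbb{E}_{c\sim U([d]),\,\{(\bm x_n,y_n)\}_{n=1}^{N+1}\overset{\text{i.i.d.}}{\sim}\mathcal{D}^{\rm tr}_c}\big[G_{i,j}\,(y_{N+1}x_{N+1,k}-\epsilon)\big].$$ Then the minimum value of the adversarial pretraining problem $$\min_{\bm P,\bm Q\in[0,1]^{(d+1)\times(d+1)}}\ \mathbb{E}_{c\sim U([d]),\,\{(\bm x_n,y_n)\}_{n=1}^{N+1}\overset{\text{i.i.d.}}{\sim}\mathcal{D}^{\rm tr}_c}\Big[\max_{\|\bm\Delta\|_\infty\le\epsilon}-y_{N+1}[f(\bm Z;\bm P,\bm Q)]_{d+1,N+1}\Big]$$ equals $$-\max_{\bm b\in\{0,1\}^{d+1}}\ \sum_{j=1}^{d+1}\sum_{k=1}^{d}\max\Big(0,\ \sum_{i=1}^{d+1} b_i\,h_{i,j,k}\Big).$$ Moreover, if $\bm b^\star\in\{0,1\}^{d+1}$ attains this maximum, then a global minimizer of the pretraining problem is given by $\bm P=\begin{bmatrix}\bm 0_{d,d+1}\\ (\bm b^\star)^\top\end{bmatrix}$ and $\bm Q=\begin{bmatrix}\bm A & \bm 0_{d+1}\end{bmatrix}$, where $\bm A\in\{0,1\}^{(d+1)\times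 d}$ is defined by $A_{j,k}=1$ if $\sum_{i=1}^{d+1} b^\star_i h_{i,j,k}\ge 0$ and $A_{j,k}=0$ otherwise.
   Context: For $n\in\mathbb{N}$, $[n]:=\{1,\dots,n\}$. $U(\mathcal S)$ is the uniform distribution on a set $\mathcal S$. $\bm 1_{a}$, $\bm 1_{a,b}$, $\bm 0_a$, $\bm 0_{a,b}$, $\bm I_a$ denote the all-ones vector/matrix, the all-zeros vector/matrix and the identity. Training distributions: for $c\in[d]$ and $0<\lambda<1$, a sample $(\bm x,y)\sim\mathcal{D}^{\rm tr}_c$ with $\bm x\in\mathbb{R}^d$ is generated as follows: $y\sim U(\{\pm1\})$, $x_c=y$, and for each $i\ne c$, $x_i\sim U([0,\lambda])$ if $y=1$ and $x_i\sim U([-\lambda,0])$ if $y=-1$; given $y$, the coordinates $x_i$ are mutually independent. Transformer: given demonstrations $(\bm x_1,y_1),\dots,(\bm x_N,y_N)$, a query $\bm x_{N+1}\in\mathbb{R}^d$ and a perturbation $\bm\Delta\in\mathbb{R}^d$, let $\bm Z\in\mathbb{R}^{(d+1)\times(N+1)}$ be the matrix whose $n$-th column is $(\bm x_n^\top, y_n)^\top$ for $n\le N$ and whose last column is $((\bm x_{N+1}+\bm\Delta)^\top,0)^\top$. Let $\bm M:=\begin{bmatrix}\bm I_N&0\\0&0\end{bmatrix}\in\mathbb{R}^{(N+1)\times(N+1)}$ and, for $\bm P,\bm Q\in\mathbb{R}^{(d+1)\times(d+1)}$, $f(\bm Z;\bm P,\bm Q):=\frac1N\bm P\bm Z\bm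 M\bm Z^\top\bm Q\bm Z$. $[\cdot]_{d+1,N+1}$ denotes the $(d+1,N+1)$ entry. *)

theory Defs
  imports "HOL-Analysis.Analysis"
begin

text \<open>Matrices are functions nat => nat => real, indexed 1-based; products range over
  an explicit index set of the inner dimension.\<close>

definition mmul :: "nat set \<Rightarrow> (nat \<Rightarrow> nat \<Rightarrow> real) \<Rightarrow> (nat \<Rightarrow> nat \<Rightarrow> real) \<Rightarrow> nat \<Rightarrow> nat \<Rightarrow> real" where
  "mmul K A B = (\<lambda>i j. \<Sum>k\<in>K. A i k * B k j)"

definition mtr :: "(nat \<Rightarrow> nat \<Rightarrow> real) \<Rightarrow> nat \<Rightarrow> nat \<Rightarrow> real" where
  "mtr A = (\<lambda>i j. A j i)"

text \<open>A labelled example (x,y) with x in R^d is encoded as z :: nat => real with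
  z i = x_i for i in {1..d} and z (d+1) = y.  Training distribution D^tr_c:
  y ~ U({-1,1}), x_c = y, and for i ~= c, x_i = y * u_i with u_i ~ U([0,lam]) i.i.d.
  (i.e. x_i ~ U([0,lam]) if y = 1 and x_i ~ U([-lam,0]) if y = -1).\<close>

definition Dtr :: "nat \<Rightarrow> real \<Rightarrow> nat \<Rightarrow> (nat \<Rightarrow> real) measure" where
  "Dtr d lam c =
     distr (PiM {1..d+1} (\<lambda>i. if i = d+1 then uniform_count_measure {-1, 1}
                               else uniform_measure lborel {0..lam}))
           (PiM {1..d+1} (\<lambda>_. borel))
           (\<lambda>w. \<lambda>i\<in>{1..d+1}. if i = d+1 \<or> i = c then w (d+1) else w (d+1) * w i)"

definition sample_measure :: "nat \<Rightarrow> nat \<Rightarrow> real \<Rightarrow> nat \<Rightarrow> (nat \<Rightarrow> nat \<Rightarrow> real) measure" where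
  "sample_measure d N lam c = PiM {1..N+1} (\<lambda>_. Dtr d lam c)"

definition Etr :: "nat \<Rightarrow> nat \<Rightarrow> real \<Rightarrow> ((nat \<Rightarrow> nat \<Rightarrow> real) \<Rightarrow> real) \<Rightarrow> real" where
  "Etr d N lam g = (\<Sum>c\<in>{1..d}. integral\<^sup>L (sample_measure d N lam c) g) / real d"

definition Zmat :: "nat \<Rightarrow> nat \<Rightarrow> (nat \<Rightarrow> nat \<Rightarrow> real) \<Rightarrow> (nat \<Rightarrow> real) \<Rightarrow> nat \<Rightarrow> nat \<Rightarrow> real" where
  "Zmat d N S \<Delta> = (\<lambda>i n. if n \<le> N then S n i
                          else if i \<le> d then S (N+1) i + \<Delta> i else 0)"

definition Mmat :: "nat \<Rightarrow> nat \<Rightarrow> nat \<Rightarrow> real" where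
  "Mmat N = (\<lambda>i j. if i = j \<and> i \<le> N then 1 else 0)"

definition tf :: "nat \<Rightarrow> nat \<Rightarrow> (nat \<Rightarrow> nat \<Rightarrow> real) \<Rightarrow> (nat \<Rightarrow> nat \<Rightarrow> real) \<Rightarrow> (nat \<Rightarrow> nat \<Rightarrow> real) \<Rightarrow> nat \<Rightarrow> nat \<Rightarrow> real" where
  "tf d N Z P Q = (\<lambda>i j. (1 / real N) *
     mmul {1..d+1}
       (mmul {1..d+1}
         (mmul {1..N+1} (mmul {1..N+1} (mmul {1..d+1} P Z) (Mmat N)) (mtr Z))
         Q)
       Z i j)"

text \<open>G = (1/N) Z M Z^T (independent of the perturbation; we build Z with Delta = 0).\<close>
definition Gmat :: "nat \<Rightarrow> nat \<Rightarrow> (nat \<Rightarrow> nat \<Rightarrow> real) \<Rightarrow> nat \<Rightarrow> nat \<Rightarrow> real" where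
  "Gmat d N S = (\<lambda>i j. (1 / real N) *
     mmul {1..N+1} (mmul {1..N+1} (Zmat d N S (\<lambda>_. 0)) (Mmat N)) (mtr (Zmat d N S (\<lambda>_. 0))) i j)"

definition hcoef :: "nat \<Rightarrow> nat \<Rightarrow> real \<Rightarrow> real \<Rightarrow> nat \<Rightarrow> nat \<Rightarrow> nat \<Rightarrow> real" where
  "hcoef d N lam \<epsilon> i j k = Etr d N lam (\<lambda>S. Gmat d N S i j * (S (N+1) (d+1) * S (N+1) k - \<epsilon>))"

definition adv_loss :: "nat \<Rightarrow> nat \<Rightarrow> real \<Rightarrow> real \<Rightarrow> (nat \<Rightarrow> nat \<Rightarrow> real) \<Rightarrow> (nat \<Rightarrow> nat \<Rightarrow> real) \<Rightarrow> real" where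
  "adv_loss d N lam \<epsilon> P Q = Etr d N lam (\<lambda>S.
     SUP \<Delta>\<in>{\<Delta>. \<forall>l\<in>{1..d}. \<bar>\<Delta> l\<bar> \<le> \<epsilon>}.
       - S (N+1) (d+1) * tf d N (Zmat d N S \<Delta>) P Q (d+1) (N+1))"

definition feasible :: "nat \<Rightarrow> (nat \<Rightarrow> nat \<Rightarrow> real) set" where
  "feasible d = {P. \<forall>i\<in>{1..d+1}. \<forall>j\<in>{1..d+1}. 0 \<le> P i j \<and> P i j \<le> 1}"

definition bobj :: "nat \<Rightarrow> nat \<Rightarrow> real \<Rightarrow> real \<Rightarrow> (nat \<Rightarrow> real) \<Rightarrow> real" where
  "bobj d N lam \<epsilon> b = (\<Sum>j\<in>{1..d+1}. \<Sum>k\<in>{1..d}.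
      max 0 (\<Sum>i\<in>{1..d+1}. b i * hcoef d N lam \<epsilon> i j k))"

definition Pstar :: "nat \<Rightarrow> (nat \<Rightarrow> real) \<Rightarrow> nat \<Rightarrow> nat \<Rightarrow> real" where
  "Pstar d b = (\<lambda>i j. if i = d+1 then b j else 0)"

definition Qstar :: "nat \<Rightarrow> nat \<Rightarrow> real \<Rightarrow> real \<Rightarrow> (nat \<Rightarrow> real) \<Rightarrow> nat \<Rightarrow> nat \<Rightarrow> real" where
  "Qstar d N lam \<epsilon> b = (\<lambda>j k. if 1 \<le> k \<and> k \<le> d \<and>
        0 \<le> (\<Sum>i\<in>{1..d+1}. b i * hcoef d N lam \<epsilon> i j k) then 1 else 0)"

end

theory Submission
  imports Defs "HOL-Probability.Probability"
begin

definition base :: "nat \<Rightarrow> real \<Rightarrow> (nat \<Rightarrow> real) measure" where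
  "base d lam = PiM {1..d+1} (\<lambda>i. if i = d+1 then uniform_count_measure {-1, 1}
                               else uniform_measure lborel {0..lam})"

definition fmap :: "nat \<Rightarrow> nat \<Rightarrow> (nat \<Rightarrow> real) \<Rightarrow> nat \<Rightarrow> real" where
  "fmap d c = (\<lambda>w. \<lambda>i\<in>{1..d+1}. if i = d+1 \<or> i = c then w (d+1) else w (d+1) * w i)"

lemma Dtr_eq: "Dtr d lam c = distr (base d lam) (PiM {1..d+1} (\<lambda>_. borel)) (fmap d c)"
  unfolding Dtr_def base_def fmap_def by simp

lemma base_comp_meas:
  assumes "i \<in> {1..d+1}"
  shows "(\<lambda>w. w i) \<in> borel_measurable (base d lam)"
proof -
  have m: "(\<lambda>w. w i) \<in> measurable (base d lam) (if i = d+1 then uniform_count_measure {-1, 1}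
                               else uniform_measure lborel {0..lam})"
    unfolding base_def using assms by (rule measurable_component_singleton)
  show ?thesis
  proof (cases "i = d+1")
    case True
    have "(\<lambda>x. x) \<in> measurable (uniform_count_measure {-1::real, 1}) borel"
      by (simp add: measurable_def sets_uniform_count_measure space_uniform_count_measure)
    moreover have "(\<lambda>w. w i) \<in> measurable (base d lam) (uniform_count_measure {-1::real, 1})"
      using m True by simp
    ultimately show ?thesis using measurable_comp[of "\<lambda>w. w i" "base d lam" "uniform_count_measure {-1::real, 1}" "\<lambda>x. x" borel]
      by (simp add: o_def)
  next
    case False
    have "(\<lambda>x. x) \<in> measurable (uniform_measure lborel {0..lam::real}) borel"
      by (rule measurable_ident_sets) simp
    moreover have "(\<lambda>w. w i) \<in> measurable (base d lam) (uniform_measure lborel {0..lam::real})"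
      using m False by simp
    ultimately show ?thesis using measurable_comp[of "\<lambda>w. w i" "base d lam" "uniform_measure lborel {0..lam::real}" "\<lambda>x. x" borel]
      by (simp add: o_def)
  qed
qed

lemma fmap_meas: "fmap d c \<in> measurable (base d lam) (PiM {1..d+1} (\<lambda>_. borel))"
  unfolding fmap_def
  apply (rule measurable_restrict)
  using base_comp_meas by auto

lemma prob_base: "0 < lam \<Longrightarrow> prob_space (base d lam)"
  unfolding base_def
  by (rule prob_space_PiM) (auto intro!: prob_space_uniform_count_measure prob_space_uniform_measure)

lemma prob_Dtr: "0 < lam \<Longrightarrow> prob_space (Dtr d lam c)"
  unfolding Dtr_eq by (rule prob_space.prob_space_distr[OF prob_base fmap_meas])

lemma prob_sample: "0 < lam \<Longrightarrow> prob_space (sample_measure d N lam c)"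
  unfolding sample_measure_def by (rule prob_space_PiM) (rule prob_Dtr)

definition good :: "nat \<Rightarrow> (nat \<Rightarrow> real) \<Rightarrow> bool" where
  "good d x \<longleftrightarrow> (x (d+1) = -1 \<or> x (d+1) = 1) \<and> (\<forall>i\<in>{1..d+1}. 0 \<le> x i * x (d+1) \<and> \<bar>x i\<bar> \<le> 1)"

lemma AE_base:
  assumes "0 < lam"
  shows "AE x in base d lam. (x (d+1) = -1 \<or> x (d+1) = 1) \<and> (\<forall>i\<in>{1..d}. 0 \<le> x i \<and> x i \<le> lam)"
proof -
  let ?M = "\<lambda>i. if i = d+1 then uniform_count_measure {-1, 1::real}
                               else uniform_measure lborel {0..lam}"
  have P: "\<And>i. i \<in> {1..d+1} \<Longrightarrow> prob_space (?M i)"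
    using assms by (auto intro!: prob_space_uniform_count_measure prob_space_uniform_measure)
  have 1: "AE x in base d lam. x (d+1) = -1 \<or> x (d+1) = 1"
    unfolding base_def
    apply (rule AE_PiM_component[where M="?M" and P="\<lambda>y. y = -1 \<or> y = 1", OF P])
     apply simp
    apply (simp add: AE_I2 space_uniform_count_measure)
    by (rule AE_I2) (auto simp: space_uniform_count_measure)
  have 2: "AE x in base d lam. 0 \<le> x i \<and> x i \<le> lam" if "i \<in> {1..d}" for i
    unfolding base_def
    apply (rule AE_PiM_component[where M="?M" and P="\<lambda>y. 0 \<le> y \<and> y \<le> lam", OF P])
    using that apply simp
    using that by (auto intro!: AE_uniform_measureI)
  show ?thesis using 1 AE_finite_allI[of "{1..d}", OF _ 2] by (auto elim: AE_mp)
qed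

lemma good_meas: "{x \<in> space (PiM {1..d+1} (\<lambda>_. borel)). good d x} \<in> sets (PiM {1..d+1} (\<lambda>_. borel::real measure))"
  unfolding good_def by measurable

lemma AE_Dtr:
  assumes "0 < lam" "lam < 1"
  shows "AE x in Dtr d lam c. good d x"
  unfolding Dtr_eq
  apply (subst AE_distr_iff[OF fmap_meas good_meas])
  using AE_base[OF assms(1), of d]
  apply (rule AE_mp)
  apply (rule AE_I2)
  using assms apply (auto simp: good_def fmap_def)
  by (metis atLeastAtMost_iff le_Suc_eq less_le_trans not_le order.strict_implies_order)+

lemma AE_sample:
  assumes "0 < lam" "lam < 1"
  shows "AE S in sample_measure d N lam c. \<forall>n\<in>{1..N+1}. good d (S n)"
  apply (rule AE_finite_allI)
   apply simp
  unfolding sample_measure_def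
  apply (rule AE_PiM_component)
  using prob_Dtr[OF assms(1)] AE_Dtr[OF assms] by auto

lemma sample_comp_meas:
  assumes "n \<in> {1..N+1}" "i \<in> {1..d+1}"
  shows "(\<lambda>S. S n i) \<in> borel_measurable (sample_measure d N lam c)"
proof -
  have 1: "(\<lambda>S. S n) \<in> measurable (sample_measure d N lam c) (Dtr d lam c)"
    unfolding sample_measure_def using assms(1) by (rule measurable_component_singleton)
  have 2: "(\<lambda>w. w i) \<in> borel_measurable (Dtr d lam c)"
    unfolding Dtr_def measurable_distr_eq1 using assms(2) by (rule measurable_component_singleton)
  show ?thesis using measurable_comp[OF 1 2] by (simp add: o_def)
qed

lemma mmul_M:
  assumes "n \<in> {1..N+1}"
  shows "mmul {1..N+1} A (Mmat N) a n = (if n \<le> N then A a n else 0)"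
proof -
  have "mmul {1..N+1} A (Mmat N) a n = (\<Sum>k\<in>{1..N+1}. if k = n then (if n \<le> N then A a n else 0) else 0)"
    unfolding mmul_def Mmat_def by (rule sum.cong) auto
  also have "\<dots> = (if n \<le> N then A a n else 0)" using assms by (simp add: sum.delta)
  finally show ?thesis .
qed

lemma mmul_MM:
  "mmul {1..N+1} (mmul {1..N+1} A (Mmat N)) B a b = (\<Sum>n\<in>{1..N}. A a n * B n b)"
proof -
  have "mmul {1..N+1} (mmul {1..N+1} A (Mmat N)) B a b
       = (\<Sum>n\<in>{1..N+1}. (if n \<le> N then A a n * B n b else 0))"
    unfolding mmul_def[of "{1..N+1}" "mmul {1..N+1} A (Mmat N)"]
    apply (rule sum.cong, rule refl)
    subgoal for n by (subst mmul_M, assumption) simp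
    done
  also have "\<dots> = (\<Sum>n\<in>{1..N}. A a n * B n b)"
    by (simp add: sum.If_cases Int_def)
  finally show ?thesis .
qed

lemma Gmat_eq: "Gmat d N S i j = (1 / real N) * (\<Sum>n\<in>{1..N}. S n i * S n j)"
  unfolding Gmat_def mmul_MM by (simp add: Zmat_def mtr_def)

lemma sum_Suc1: "(\<Sum>k\<in>{1..(d::nat)+1}. g k) = (\<Sum>k\<in>{1..d}. g k) + (g (d+1) :: real)"
  using sum.cl_ivl_Suc[of g 1 d] by simp

declare sum.cl_ivl_Suc[simp del]

lemma mmul_app: "mmul K A B i j = (\<Sum>k\<in>K. A i k * B k j)"
  by (simp add: mmul_def)

lemma tf_eq:
  assumes "1 \<le> N"
  shows "tf d N (Zmat d N S \<Delta>) P Q (d+1) (N+1)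
    = (\<Sum>k\<in>{1..d}. (\<Sum>j\<in>{1..d+1}. Q j k * (\<Sum>i\<in>{1..d+1}. P (d+1) i * Gmat d N S i j)) * (S (N+1) k + \<Delta> k))"
proof -
  let ?Z = "Zmat d N S \<Delta>"
  let ?C = "mmul {1..N+1} (mmul {1..N+1} (mmul {1..d+1} P ?Z) (Mmat N)) (mtr ?Z)"
  have C: "?C a b = real N * (\<Sum>i\<in>{1..d+1}. P a i * Gmat d N S i b)" for a b
  proof -
    have "?C a b = (\<Sum>n\<in>{1..N}. (\<Sum>i\<in>{1..d+1}. P a i * S n i) * S n b)"
      unfolding mmul_MM by (rule sum.cong) (auto simp: mmul_def Zmat_def mtr_def)
    also have "\<dots> = (\<Sum>n\<in>{1..N}. \<Sum>i\<in>{1..d+1}. P a i * S n i * S n b)"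
      by (simp only: sum_distrib_right)
    also have "\<dots> = (\<Sum>i\<in>{1..d+1}. \<Sum>n\<in>{1..N}. P a i * S n i * S n b)"
      by (rule sum.swap)
    also have "\<dots> = (\<Sum>i\<in>{1..d+1}. P a i * (\<Sum>n\<in>{1..N}. S n i * S n b))"
      by (simp only: sum_distrib_left mult.assoc)
    also have "\<dots> = (\<Sum>i\<in>{1..d+1}. real N * (P a i * Gmat d N S i b))"
      by (rule sum.cong) (use assms in \<open>auto simp: Gmat_eq\<close>)
    also have "\<dots> = real N * (\<Sum>i\<in>{1..d+1}. P a i * Gmat d N S i b)"
      by (simp only: sum_distrib_left)
    finally show ?thesis .
  qed
  have "tf d N ?Z P Q (d+1) (N+1) = (1 / real N) * (\<Sum>k\<in>{1..d+1}. (\<Sum>j\<in>{1..d+1}. ?C (d+1) j * Q j k) * ?Z k (N+1))"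
    unfolding tf_def mmul_app[of "{1..d+1}" "mmul {1..d+1} ?C Q" ?Z] mmul_app[of "{1..d+1}" ?C Q] by simp
  also have "\<dots> = (1 / real N) * (\<Sum>k\<in>{1..d}. (\<Sum>j\<in>{1..d+1}. ?C (d+1) j * Q j k) * (S (N+1) k + \<Delta> k))"
    by (subst sum_Suc1) (auto simp: Zmat_def intro!: sum.cong)
  also have "\<dots> = (1 / real N) * (\<Sum>k\<in>{1..d}. (\<Sum>j\<in>{1..d+1}. (real N * (\<Sum>i\<in>{1..d+1}. P (d+1) i * Gmat d N S i j)) * Q j k) * (S (N+1) k + \<Delta> k))"
    by (simp only: C)
  also have "\<dots> = (1 / real N) * (\<Sum>k\<in>{1..d}. real N * ((\<Sum>j\<in>{1..d+1}. Q j k * (\<Sum>i\<in>{1..d+1}. P (d+1) i * Gmat d N S i j)) * (S (N+1) k + \<Delta> k)))"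
    by (simp only: sum_distrib_left mult_ac)
  also have "\<dots> = (\<Sum>k\<in>{1..d}. (\<Sum>j\<in>{1..d+1}. Q j k * (\<Sum>i\<in>{1..d+1}. P (d+1) i * Gmat d N S i j)) * (S (N+1) k + \<Delta> k))"
    using assms by (simp add: sum_distrib_left[symmetric])
  finally show ?thesis .
qed

lemma Etr_sum:
  assumes "finite T" "\<And>c t. c \<in> {1..d} \<Longrightarrow> t \<in> T \<Longrightarrow> integrable (sample_measure d N lam c) (F t)"
  shows "Etr d N lam (\<lambda>S. \<Sum>t\<in>T. F t S) = (\<Sum>t\<in>T. Etr d N lam (F t))"
proof -
  have "Etr d N lam (\<lambda>S. \<Sum>t\<in>T. F t S) = (\<Sum>c\<in>{1..d}. \<Sum>t\<in>T. integral\<^sup>L (sample_measure d N lam c) (F t)) / real d"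
  proof -
    have "\<And>c. c\<in>{1..d} \<Longrightarrow> integral\<^sup>L (sample_measure d N lam c) (\<lambda>S. \<Sum>t\<in>T. F t S) = (\<Sum>t\<in>T. integral\<^sup>L (sample_measure d N lam c) (F t))"
      by (rule Bochner_Integration.integral_sum) (use assms in auto)
    then have "(\<Sum>c\<in>{1..d}. integral\<^sup>L (sample_measure d N lam c) (\<lambda>S. \<Sum>t\<in>T. F t S)) = (\<Sum>c\<in>{1..d}. \<Sum>t\<in>T. integral\<^sup>L (sample_measure d N lam c) (F t))"
      by (rule sum.cong[OF refl])
    then show ?thesis unfolding Etr_def by (simp only:)
  qed
  also have "\<dots> = (\<Sum>t\<in>T. Etr d N lam (F t))"
    unfolding Etr_def by (subst sum.swap) (simp add: sum_divide_distrib)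
  finally show ?thesis .
qed

lemma Etr_cmult: "Etr d N lam (\<lambda>S. a * F S) = a * Etr d N lam F"
  unfolding Etr_def by (simp add: sum_distrib_left)

lemma Etr_cong_AE:
  assumes "\<And>c. c \<in> {1..d} \<Longrightarrow> f \<in> borel_measurable (sample_measure d N lam c)"
    "\<And>c. c \<in> {1..d} \<Longrightarrow> g \<in> borel_measurable (sample_measure d N lam c)"
    "\<And>c. c \<in> {1..d} \<Longrightarrow> AE S in sample_measure d N lam c. f S = g S"
  shows "Etr d N lam f = Etr d N lam g"
proof -
  have "\<And>c. c\<in>{1..d} \<Longrightarrow> integral\<^sup>L (sample_measure d N lam c) f = integral\<^sup>L (sample_measure d N lam c) g"
    by (rule integral_cong_AE) (use assms in auto)
  then have "(\<Sum>c\<in>{1..d}. integral\<^sup>L (sample_measure d N lam c) f) = (\<Sum>c\<in>{1..d}. integral\<^sup>L (sample_measure d N lam c) g)"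
    by (rule sum.cong[OF refl])
  then show ?thesis unfolding Etr_def by (simp only:)
qed

lemma sup_lin:
  fixes c x :: "nat \<Rightarrow> real" and y \<epsilon> :: real
  assumes "finite K" "0 \<le> \<epsilon>"
  shows "(SUP \<Delta>\<in>{\<Delta>. \<forall>l\<in>K. \<bar>\<Delta> l\<bar> \<le> \<epsilon>}. - y * (\<Sum>k\<in>K. c k * (x k + \<Delta> k)))
       = - y * (\<Sum>k\<in>K. c k * x k) + \<epsilon> * (\<Sum>k\<in>K. \<bar>y * c k\<bar>)"
proof -
  let ?f = "\<lambda>\<Delta>. - y * (\<Sum>k\<in>K. c k * (x k + \<Delta> k))"
  have e: "?f \<Delta> = - y * (\<Sum>k\<in>K. c k * x k) + (\<Sum>k\<in>K. - (y * c k) * \<Delta> k)" for \<Delta>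
    by (simp add: distrib_left sum.distrib sum_distrib_left sum_negf algebra_simps)
  let ?D = "\<lambda>k. - \<epsilon> * sgn (y * c k)"
  have 1: "?D \<in> {\<Delta>. \<forall>l\<in>K. \<bar>\<Delta> l\<bar> \<le> \<epsilon>}"
    using assms by (auto simp: abs_mult abs_sgn_eq)
  have 2: "?f ?D = - y * (\<Sum>k\<in>K. c k * x k) + \<epsilon> * (\<Sum>k\<in>K. \<bar>y * c k\<bar>)"
  proof -
    have h: "\<And>k. - (y * c k) * (- \<epsilon> * sgn (y * c k)) = \<epsilon> * \<bar>y * c k\<bar>"
      by (simp add: sgn_if)
    show ?thesis unfolding e by (simp only: h sum_distrib_left)
  qed
  have 3: "?f \<Delta> \<le> - y * (\<Sum>k\<in>K. c k * x k) + \<epsilon> * (\<Sum>k\<in>K. \<bar>y * c k\<bar>)"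
    if "\<Delta> \<in> {\<Delta>. \<forall>l\<in>K. \<bar>\<Delta> l\<bar> \<le> \<epsilon>}" for \<Delta>
  proof -
    have "(\<Sum>k\<in>K. - (y * c k) * \<Delta> k) \<le> (\<Sum>k\<in>K. \<epsilon> * \<bar>y * c k\<bar>)"
    proof (rule sum_mono)
      fix k assume "k \<in> K"
      then have "\<bar>\<Delta> k\<bar> \<le> \<epsilon>" using that by auto
      have "- (y * c k) * \<Delta> k \<le> \<bar>- (y * c k) * \<Delta> k\<bar>" by simp
      also have "\<dots> = \<bar>y * c k\<bar> * \<bar>\<Delta> k\<bar>" by (simp add: abs_mult)
      also have "\<dots> \<le> \<bar>y * c k\<bar> * \<epsilon>" using \<open>\<bar>\<Delta> k\<bar> \<le> \<epsilon>\<close> by (simp add: mult_left_mono)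
      finally show "- (y * c k) * \<Delta> k \<le> \<epsilon> * \<bar>y * c k\<bar>" by (simp add: mult_ac)
    qed
    then show ?thesis unfolding e by (simp add: sum_distrib_left)
  qed
  show ?thesis
    apply (rule cSup_eq_maximum)
      apply (rule image_eqI[where x="?D"])
      apply (rule 2[symmetric])
     apply (rule 1)
    using 3 by auto
qed

definition goodall :: "nat \<Rightarrow> nat \<Rightarrow> (nat \<Rightarrow> nat \<Rightarrow> real) \<Rightarrow> bool" where
  "goodall d N S \<longleftrightarrow> (\<forall>n\<in>{1..N+1}. good d (S n))"

lemma good_prod:
  assumes "good d x" "i \<in> {1..d+1}" "j \<in> {1..d+1}"
  shows "0 \<le> x i * x j \<and> x i * x j \<le> 1"
proof -
  have y: "x (d+1) = -1 \<or> x (d+1) = 1" and a: "0 \<le> x i * x (d+1)" "0 \<le> x j * x (d+1)"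
    and b: "\<bar>x i\<bar> \<le> 1" "\<bar>x j\<bar> \<le> 1"
    using assms unfolding good_def by auto
  have e: "x i * x j = (x i * x (d+1)) * (x j * x (d+1))" using y by auto
  have "0 \<le> x i * x j" by (subst e, rule mult_nonneg_nonneg[OF a])
  moreover have "\<bar>x i * x j\<bar> \<le> 1" using b by (simp add: abs_mult mult_le_one)
  ultimately show ?thesis by simp
qed

lemma Gmat_bounds:
  assumes "goodall d N S" "1 \<le> N" "i \<in> {1..d+1}" "j \<in> {1..d+1}"
  shows "0 \<le> Gmat d N S i j \<and> Gmat d N S i j \<le> 1"
proof -
  have t: "0 \<le> S n i * S n j \<and> S n i * S n j \<le> 1" if "n \<in> {1..N}" for n
    using good_prod[of d "S n" i j] assms that unfolding goodall_def by auto
  have "0 \<le> (\<Sum>n\<in>{1..N}. S n i * S n j)" by (intro sum_nonneg) (use t in auto)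
  moreover have "(\<Sum>n\<in>{1..N}. S n i * S n j) \<le> (\<Sum>n\<in>{1..N}. 1)" using t by (intro sum_mono) auto
  ultimately show ?thesis using assms(2) by (simp add: Gmat_eq)
qed

lemma good_abs: "good d x \<Longrightarrow> i \<in> {1..d+1} \<Longrightarrow> \<bar>x i\<bar> \<le> 1"
  unfolding good_def by auto

lemma good_y: "good d x \<Longrightarrow> \<bar>x (d+1)\<bar> = 1"
  unfolding good_def by auto

lemma meas_Gmat:
  assumes "i \<in> {1..d+1}" "j \<in> {1..d+1}"
  shows "(\<lambda>S. Gmat d N S i j) \<in> borel_measurable (sample_measure d N lam c)"
  unfolding Gmat_eq
  by (intro borel_measurable_times borel_measurable_const borel_measurable_sum)
     (use assms in \<open>auto intro!: sample_comp_meas\<close>)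

lemma integrable_F:
  assumes "0 < lam" "lam < 1" "1 \<le> N" "i \<in> {1..d+1}" "j \<in> {1..d+1}" "k \<in> {1..d}"
  shows "integrable (sample_measure d N lam c) (\<lambda>S. Gmat d N S i j * (S (N+1) (d+1) * S (N+1) k - \<epsilon>))"
proof -
  interpret prob_space "sample_measure d N lam c" by (rule prob_sample[OF assms(1)])
  show ?thesis
  proof (rule integrable_const_bound[where B="1 + \<bar>\<epsilon>\<bar>"])
    show "AE S in sample_measure d N lam c. norm (Gmat d N S i j * (S (N+1) (d+1) * S (N+1) k - \<epsilon>)) \<le> 1 + \<bar>\<epsilon>\<bar>"
      using AE_sample[OF assms(1,2), where d=d and N=N and c=c]
    proof (rule AE_mp, intro AE_I2 impI)
      fix S assume g: "\<forall>n\<in>{1..N+1}. good d (S n)"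
      then have G: "0 \<le> Gmat d N S i j \<and> Gmat d N S i j \<le> 1"
        using Gmat_bounds[of d N S i j] assms unfolding goodall_def by auto
      have gN: "good d (S (N+1))" using g by auto
      have "\<bar>S (N+1) (d+1) * S (N+1) k\<bar> \<le> 1"
        using good_abs[OF gN, of k] good_y[OF gN] assms(6) by (simp add: abs_mult)
      then have "\<bar>S (N+1) (d+1) * S (N+1) k - \<epsilon>\<bar> \<le> 1 + \<bar>\<epsilon>\<bar>" by linarith
      then show "norm (Gmat d N S i j * (S (N+1) (d+1) * S (N+1) k - \<epsilon>)) \<le> 1 + \<bar>\<epsilon>\<bar>"
      proof -
        have "\<bar>Gmat d N S i j\<bar> * \<bar>S (N+1) (d+1) * S (N+1) k - \<epsilon>\<bar> \<le> 1 * \<bar>S (N+1) (d+1) * S (N+1) k - \<epsilon>\<bar>"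
          using G by (intro mult_right_mono) auto
        then show ?thesis using \<open>\<bar>S (N+1) (d+1) * S (N+1) k - \<epsilon>\<bar> \<le> 1 + \<bar>\<epsilon>\<bar>\<close> by (simp add: abs_mult)
      qed
    qed
    show "(\<lambda>S. Gmat d N S i j * (S (N+1) (d+1) * S (N+1) k - \<epsilon>)) \<in> borel_measurable (sample_measure d N lam c)"
      by (intro borel_measurable_times borel_measurable_diff borel_measurable_const meas_Gmat sample_comp_meas)
         (use assms in auto)
  qed
qed

lemma adv_loss_eq:
  assumes d: "1 \<le> d" and N: "1 \<le> N" and l: "0 < lam" "lam < 1" and e: "0 \<le> \<epsilon>"
    and P: "P \<in> feasible d" and Q: "Q \<in> feasible d"
  shows "adv_loss d N lam \<epsilon> P Q = - (\<Sum>k\<in>{1..d}. \<Sum>j\<in>{1..d+1}. \<Sum>i\<in>{1..d+1}.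
            Q j k * P (d+1) i * hcoef d N lam \<epsilon> i j k)"
proof -
  define cc where "cc S k = (\<Sum>j\<in>{1..d+1}. Q j k * (\<Sum>i\<in>{1..d+1}. P (d+1) i * Gmat d N S i j))" for S k
  define F where "F i j k S = Gmat d N S i j * (S (N+1) (d+1) * S (N+1) k - \<epsilon>)" for i j k S
  have s1: "adv_loss d N lam \<epsilon> P Q = Etr d N lam (\<lambda>S. - S (N+1) (d+1) * (\<Sum>k\<in>{1..d}. cc S k * S (N+1) k)
       + \<epsilon> * (\<Sum>k\<in>{1..d}. \<bar>S (N+1) (d+1) * cc S k\<bar>))"
    unfolding adv_loss_def tf_eq[OF N] cc_def sup_lin[OF finite_atLeastAtMost e] by (rule refl)
  have mcc: "(\<lambda>S. cc S k) \<in> borel_measurable (sample_measure d N lam c)" for c k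
    unfolding cc_def
    by (intro borel_measurable_times borel_measurable_const borel_measurable_sum meas_Gmat) auto
  have s2: "Etr d N lam (\<lambda>S. - S (N+1) (d+1) * (\<Sum>k\<in>{1..d}. cc S k * S (N+1) k)
       + \<epsilon> * (\<Sum>k\<in>{1..d}. \<bar>S (N+1) (d+1) * cc S k\<bar>))
     = Etr d N lam (\<lambda>S. \<Sum>k\<in>{1..d}. \<Sum>j\<in>{1..d+1}. \<Sum>i\<in>{1..d+1}. (- (Q j k * P (d+1) i)) * F i j k S)"
  proof (rule Etr_cong_AE)
    fix c
    show "(\<lambda>S. - S (N+1) (d+1) * (\<Sum>k\<in>{1..d}. cc S k * S (N+1) k)
       + \<epsilon> * (\<Sum>k\<in>{1..d}. \<bar>S (N+1) (d+1) * cc S k\<bar>)) \<in> borel_measurable (sample_measure d N lam c)"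
      by (intro borel_measurable_add borel_measurable_times borel_measurable_uminus borel_measurable_const
          borel_measurable_sum borel_measurable_abs mcc sample_comp_meas) auto
    show "(\<lambda>S. \<Sum>k\<in>{1..d}. \<Sum>j\<in>{1..d+1}. \<Sum>i\<in>{1..d+1}. (- (Q j k * P (d+1) i)) * F i j k S) \<in> borel_measurable (sample_measure d N lam c)"
      unfolding F_def
      by (intro borel_measurable_times borel_measurable_diff borel_measurable_const
          borel_measurable_sum meas_Gmat sample_comp_meas) auto
    show "AE S in sample_measure d N lam c. - S (N+1) (d+1) * (\<Sum>k\<in>{1..d}. cc S k * S (N+1) k)
       + \<epsilon> * (\<Sum>k\<in>{1..d}. \<bar>S (N+1) (d+1) * cc S k\<bar>)
     = (\<Sum>k\<in>{1..d}. \<Sum>j\<in>{1..d+1}. \<Sum>i\<in>{1..d+1}. (- (Q j k * P (d+1) i)) * F i j k S)"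
      using AE_sample[OF l, where d=d and N=N and c=c]
    proof (rule AE_mp, intro AE_I2 impI)
      fix S assume g: "\<forall>n\<in>{1..N+1}. good d (S n)"
      then have ga: "goodall d N S" unfolding goodall_def .
      have gN: "good d (S (N+1))" using g by auto
      have y: "\<bar>S (N+1) (d+1)\<bar> = 1" using good_y[OF gN] .
      have ccn: "0 \<le> cc S k" if "k \<in> {1..d}" for k
        unfolding cc_def using that P Q Gmat_bounds[OF ga N]
        by (intro sum_nonneg mult_nonneg_nonneg) (auto simp: feasible_def)
      have "- S (N+1) (d+1) * (\<Sum>k\<in>{1..d}. cc S k * S (N+1) k)
          + \<epsilon> * (\<Sum>k\<in>{1..d}. \<bar>S (N+1) (d+1) * cc S k\<bar>)
          = - S (N+1) (d+1) * (\<Sum>k\<in>{1..d}. cc S k * S (N+1) k) + \<epsilon> * (\<Sum>k\<in>{1..d}. cc S k)"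
        using ccn y by (simp add: abs_mult)
      also have "\<dots> = (\<Sum>k\<in>{1..d}. - (cc S k * (S (N+1) (d+1) * S (N+1) k - \<epsilon>)))"
        by (simp add: sum_distrib_left sum.distrib sum_subtractf algebra_simps sum_negf)
      also have "\<dots> = (\<Sum>k\<in>{1..d}. \<Sum>j\<in>{1..d+1}. \<Sum>i\<in>{1..d+1}. (- (Q j k * P (d+1) i)) * F i j k S)"
        unfolding cc_def F_def
        by (simp add: sum_distrib_left sum_distrib_right sum_negf mult_ac)
      finally show "- S (N+1) (d+1) * (\<Sum>k\<in>{1..d}. cc S k * S (N+1) k)
       + \<epsilon> * (\<Sum>k\<in>{1..d}. \<bar>S (N+1) (d+1) * cc S k\<bar>)
     = (\<Sum>k\<in>{1..d}. \<Sum>j\<in>{1..d+1}. \<Sum>i\<in>{1..d+1}. (- (Q j k * P (d+1) i)) * F i j k S)" .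
    qed
  qed
  have iF: "integrable (sample_measure d N lam c) (F i j k)" if "i \<in> {1..d+1}" "j \<in> {1..d+1}" "k \<in> {1..d}" for c i j k
    unfolding F_def using integrable_F[OF l N that] .
  have s3: "Etr d N lam (\<lambda>S. \<Sum>k\<in>{1..d}. \<Sum>j\<in>{1..d+1}. \<Sum>i\<in>{1..d+1}. (- (Q j k * P (d+1) i)) * F i j k S)
      = (\<Sum>k\<in>{1..d}. \<Sum>j\<in>{1..d+1}. \<Sum>i\<in>{1..d+1}. (- (Q j k * P (d+1) i)) * Etr d N lam (F i j k))"
    apply (subst Etr_sum, simp)
     apply (auto intro!: Bochner_Integration.integrable_sum integrable_mult_right iF)[1]
    apply (rule sum.cong[OF refl])
    apply (subst Etr_sum, simp)
     apply (auto intro!: Bochner_Integration.integrable_sum integrable_mult_right iF)[1]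
    apply (rule sum.cong[OF refl])
    apply (subst Etr_sum, simp)
     apply (auto intro!: Bochner_Integration.integrable_sum integrable_mult_right iF)[1]
    apply (rule sum.cong[OF refl])
    by (rule Etr_cmult)
  have hF: "hcoef d N lam \<epsilon> i j k = Etr d N lam (F i j k)" for i j k
    unfolding hcoef_def F_def ..
  show ?thesis
    unfolding s1 s2 s3 hF by (simp add: sum_negf)
qed

lemma bobj_cong: "(\<And>i. i \<in> {1..d+1} \<Longrightarrow> p i = q i) \<Longrightarrow> bobj d N lam \<epsilon> p = bobj d N lam \<epsilon> q"
  unfolding bobj_def by (intro sum.cong refl arg_cong[where f="max 0"]) auto

lemma max0_convex:
  fixes x y t :: real
  assumes "0 \<le> t" "t \<le> 1"
  shows "max 0 ((1 - t) * x + t * y) \<le> (1 - t) * max 0 x + t * max 0 y"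
proof -
  have "(1 - t) * x \<le> (1 - t) * max 0 x" using assms by (intro mult_left_mono) auto
  moreover have "t * y \<le> t * max 0 y" using assms by (intro mult_left_mono) auto
  moreover have "0 \<le> (1 - t) * max 0 x + t * max 0 y" using assms by auto
  ultimately show ?thesis by linarith
qed

lemma bobj_convex:
  assumes "0 \<le> t" "t \<le> 1" "\<And>i. p i = (1 - t) * p0 i + t * p1 i"
  shows "bobj d N lam \<epsilon> p \<le> (1 - t) * bobj d N lam \<epsilon> p0 + t * bobj d N lam \<epsilon> p1"
proof -
  let ?h = "hcoef d N lam \<epsilon>"
  have lin: "(\<Sum>i\<in>{1..d+1}. p i * ?h i j k) = (1 - t) * (\<Sum>i\<in>{1..d+1}. p0 i * ?h i j k) + t * (\<Sum>i\<in>{1..d+1}. p1 i * ?h i j k)" for j k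
  proof -
    have "(\<Sum>i\<in>{1..d+1}. p i * ?h i j k) = (\<Sum>i\<in>{1..d+1}. (1 - t) * (p0 i * ?h i j k) + t * (p1 i * ?h i j k))"
      by (rule sum.cong[OF refl]) (simp add: assms(3) algebra_simps)
    also have "\<dots> = (1 - t) * (\<Sum>i\<in>{1..d+1}. p0 i * ?h i j k) + t * (\<Sum>i\<in>{1..d+1}. p1 i * ?h i j k)"
      by (simp only: sum.distrib sum_distrib_left)
    finally show ?thesis .
  qed
  have "bobj d N lam \<epsilon> p \<le> (\<Sum>j\<in>{1..d+1}. \<Sum>k\<in>{1..d}. (1 - t) * max 0 (\<Sum>i\<in>{1..d+1}. p0 i * ?h i j k) + t * max 0 (\<Sum>i\<in>{1..d+1}. p1 i * ?h i j k))"
    unfolding bobj_def lin by (intro sum_mono max0_convex assms)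
  also have "\<dots> = (1 - t) * bobj d N lam \<epsilon> p0 + t * bobj d N lam \<epsilon> p1"
    unfolding bobj_def by (simp add: sum.distrib sum_distrib_left)
  finally show ?thesis .
qed

lemma bobj_vertex:
  assumes "finite I"
  shows "\<forall>p. (\<forall>i\<in>{1..d+1}. 0 \<le> p i \<and> p i \<le> 1) \<longrightarrow> (\<forall>i\<in>{1..d+1} - I. p i = 0 \<or> p i = 1)
     \<longrightarrow> (\<exists>b\<in>PiE {1..d+1} (\<lambda>_. {0, 1}). bobj d N lam \<epsilon> p \<le> bobj d N lam \<epsilon> b)"
  using assms
proof (induction I rule: finite_induct)
  case empty
  show ?case
  proof (intro allI impI)
    fix p :: "nat \<Rightarrow> real" assume "\<forall>i\<in>{1..d+1} - {}. p i = 0 \<or> p i = 1"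
    then have "restrict p {1..d+1} \<in> PiE {1..d+1} (\<lambda>_. {0, 1})" by auto
    moreover have "bobj d N lam \<epsilon> p \<le> bobj d N lam \<epsilon> (restrict p {1..d+1})"
      by (rule eq_refl, rule bobj_cong) auto
    ultimately show "\<exists>b\<in>PiE {1..d+1} (\<lambda>_. {0, 1}). bobj d N lam \<epsilon> p \<le> bobj d N lam \<epsilon> b" by blast
  qed
next
  case (insert i I)
  show ?case
  proof (intro allI impI)
    fix p :: "nat \<Rightarrow> real"
    assume r: "\<forall>i\<in>{1..d+1}. 0 \<le> p i \<and> p i \<le> 1" and b: "\<forall>i'\<in>{1..d+1} - insert i I. p i' = 0 \<or> p i' = 1"
    show "\<exists>b\<in>PiE {1..d+1} (\<lambda>_. {0, 1}). bobj d N lam \<epsilon> p \<le> bobj d N lam \<epsilon> b"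
    proof (cases "i \<in> {1..d+1}")
      case False
      then have "\<forall>i'\<in>{1..d+1} - I. p i' = 0 \<or> p i' = 1" using b by auto
      then show ?thesis using insert.IH r by blast
    next
      case True
      let ?p0 = "p(i := 0)" and ?p1 = "p(i := 1)"
      have "\<forall>i'\<in>{1..d+1}. 0 \<le> ?p0 i' \<and> ?p0 i' \<le> 1" "\<forall>i'\<in>{1..d+1} - I. ?p0 i' = 0 \<or> ?p0 i' = 1"
        using r b by auto
      then obtain b0 where b0: "b0 \<in> PiE {1..d+1} (\<lambda>_. {0, 1})" "bobj d N lam \<epsilon> ?p0 \<le> bobj d N lam \<epsilon> b0"
        using insert.IH by blast
      have "\<forall>i'\<in>{1..d+1}. 0 \<le> ?p1 i' \<and> ?p1 i' \<le> 1" "\<forall>i'\<in>{1..d+1} - I. ?p1 i' = 0 \<or> ?p1 i' = 1"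
        using r b by auto
      then obtain b1 where b1: "b1 \<in> PiE {1..d+1} (\<lambda>_. {0, 1})" "bobj d N lam \<epsilon> ?p1 \<le> bobj d N lam \<epsilon> b1"
        using insert.IH by blast
      have t: "0 \<le> p i" "p i \<le> 1" using r True by auto
      have c: "bobj d N lam \<epsilon> p \<le> (1 - p i) * bobj d N lam \<epsilon> ?p0 + p i * bobj d N lam \<epsilon> ?p1"
        by (rule bobj_convex[OF t]) (simp add: algebra_simps)
      show ?thesis
      proof (cases "bobj d N lam \<epsilon> b0 \<le> bobj d N lam \<epsilon> b1")
        case True
        have "(1 - p i) * bobj d N lam \<epsilon> ?p0 + p i * bobj d N lam \<epsilon> ?p1 \<le> (1 - p i) * bobj d N lam \<epsilon> b1 + p i * bobj d N lam \<epsilon> b1"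
          using b0(2) b1(2) True t by (intro add_mono mult_left_mono) auto
        then show ?thesis using c b1(1) by (intro bexI[of _ b1]) (auto simp: algebra_simps)
      next
        case False
        have "(1 - p i) * bobj d N lam \<epsilon> ?p0 + p i * bobj d N lam \<epsilon> ?p1 \<le> (1 - p i) * bobj d N lam \<epsilon> b0 + p i * bobj d N lam \<epsilon> b0"
          using b0(2) b1(2) False t by (intro add_mono mult_left_mono) auto
        then show ?thesis using c b0(1) by (intro bexI[of _ b0]) (auto simp: algebra_simps)
      qed
    qed
  qed
qed

theorem lemma3p1:
  fixes d N :: nat and lam \<epsilon> :: real
  assumes "1 \<le> d" and "1 \<le> N" and "0 < lam" and "lam < 1" and "0 \<le> \<epsilon>"
  defines "V \<equiv> Max (bobj d N lam \<epsilon> ` PiE {1..d+1} (\<lambda>_. {0, 1}))"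
  shows "(\<forall>P\<in>feasible d. \<forall>Q\<in>feasible d. - V \<le> adv_loss d N lam \<epsilon> P Q)
       \<and> (\<forall>b\<in>PiE {1..d+1} (\<lambda>_. {0, 1}). bobj d N lam \<epsilon> b = V \<longrightarrow>
            Pstar d b \<in> feasible d \<and> Qstar d N lam \<epsilon> b \<in> feasible d \<and>
            adv_loss d N lam \<epsilon> (Pstar d b) (Qstar d N lam \<epsilon> b) = - V)"
proof -
  let ?h = "hcoef d N lam \<epsilon>"
  have fin: "finite (bobj d N lam \<epsilon> ` PiE {1..d+1} (\<lambda>_. {0::real, 1}))" by (intro finite_imageI finite_PiE) auto
  have Vge: "bobj d N lam \<epsilon> b \<le> V" if "b \<in> PiE {1..d+1} (\<lambda>_. {0, 1})" for b
    unfolding V_def using fin that by (intro Max_ge) auto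
  have part1: "- V \<le> adv_loss d N lam \<epsilon> P Q" if P: "P \<in> feasible d" and Q: "Q \<in> feasible d" for P Q
  proof -
    have "(\<Sum>k\<in>{1..d}. \<Sum>j\<in>{1..d+1}. \<Sum>i\<in>{1..d+1}. Q j k * P (d+1) i * ?h i j k)
        = (\<Sum>k\<in>{1..d}. \<Sum>j\<in>{1..d+1}. Q j k * (\<Sum>i\<in>{1..d+1}. P (d+1) i * ?h i j k))"
      by (simp add: sum_distrib_left mult.assoc)
    also have "\<dots> \<le> (\<Sum>k\<in>{1..d}. \<Sum>j\<in>{1..d+1}. max 0 (\<Sum>i\<in>{1..d+1}. P (d+1) i * ?h i j k))"
    proof (intro sum_mono)
      fix k j assume "k \<in> {1..d}" "j \<in> {1..d+1}"
      then have "0 \<le> Q j k" "Q j k \<le> 1" using Q by (auto simp: feasible_def)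
      then show "Q j k * (\<Sum>i\<in>{1..d+1}. P (d+1) i * ?h i j k) \<le> max 0 (\<Sum>i\<in>{1..d+1}. P (d+1) i * ?h i j k)"
      proof (cases "0 \<le> (\<Sum>i\<in>{1..d+1}. P (d+1) i * ?h i j k)")
        case True
        then show ?thesis using \<open>0 \<le> Q j k\<close> \<open>Q j k \<le> 1\<close> by (simp add: mult_left_le_one_le)
      next
        case False
        then show ?thesis using \<open>0 \<le> Q j k\<close> by (simp add: mult_nonneg_nonpos)
      qed
    qed
    also have "\<dots> = bobj d N lam \<epsilon> (\<lambda>i. P (d+1) i)"
      unfolding bobj_def by (rule sum.swap)
    also have "\<dots> \<le> V"
    proof -
      have "\<forall>i\<in>{1..d+1}. 0 \<le> P (d+1) i \<and> P (d+1) i \<le> 1" using P by (auto simp: feasible_def)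
      then obtain b where "b \<in> PiE {1..d+1} (\<lambda>_. {0, 1})" "bobj d N lam \<epsilon> (\<lambda>i. P (d+1) i) \<le> bobj d N lam \<epsilon> b"
        using bobj_vertex[of "{1..d+1}" d N lam \<epsilon>] by auto
      then show ?thesis using Vge by (meson order.trans)
    qed
    finally show ?thesis using adv_loss_eq[OF assms(1-5) P Q] by simp
  qed
  have part2: "Pstar d b \<in> feasible d \<and> Qstar d N lam \<epsilon> b \<in> feasible d \<and>
            adv_loss d N lam \<epsilon> (Pstar d b) (Qstar d N lam \<epsilon> b) = - V"
    if b: "b \<in> PiE {1..d+1} (\<lambda>_. {0, 1})" and bV: "bobj d N lam \<epsilon> b = V" for b
  proof -
    have bj: "b j = 0 \<or> b j = 1" if "j \<in> {1..d+1}" for j using b that by auto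
    have PF: "Pstar d b \<in> feasible d"
      unfolding feasible_def Pstar_def using bj by fastforce
    have QF: "Qstar d N lam \<epsilon> b \<in> feasible d"
      unfolding feasible_def Qstar_def by auto
    have "(\<Sum>k\<in>{1..d}. \<Sum>j\<in>{1..d+1}. \<Sum>i\<in>{1..d+1}. Qstar d N lam \<epsilon> b j k * Pstar d b (d+1) i * ?h i j k)
        = (\<Sum>k\<in>{1..d}. \<Sum>j\<in>{1..d+1}. Qstar d N lam \<epsilon> b j k * (\<Sum>i\<in>{1..d+1}. b i * ?h i j k))"
      by (simp add: sum_distrib_left mult.assoc Pstar_def)
    also have "\<dots> = (\<Sum>k\<in>{1..d}. \<Sum>j\<in>{1..d+1}. max 0 (\<Sum>i\<in>{1..d+1}. b i * ?h i j k))"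
      by (intro sum.cong refl) (auto simp: Qstar_def)
    also have "\<dots> = bobj d N lam \<epsilon> b"
      unfolding bobj_def by (rule sum.swap)
    finally show ?thesis using adv_loss_eq[OF assms(1-5) PF QF] PF QF bV by simp
  qed
  show ?thesis using part1 part2 by blast
qed

end
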